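(* Let $F=\{f_i\}_{i=1}^N$ be a tight frame for $\mathcal H$. Suppose there exist a dual pair $(F',G')\in\mathcal F^{(1)}$ and a constant $c$ with $\operatorname{Re}\big(\langle g'_i,g'_j\rangle\langle f'_j,f'_i\rangle\big)=c$ for all $i\neq j$. Then $(F,S_F^{-1}F)\in\mathcal F^{(m)}$ for every $m\in\{1,2,\dots,N\}$ if and only if $(F,S_F^{-1}F)$ is a $2$-uniform dual pair, and this holds if and only if $F$ is an equiangular frame.
   Context: $\mathcal H$ is a complex Hilbert space of finite dimension $n$, inner product linear in the first argument, $N\ge n$. A finite sequence $F=\{f_i\}_{i=1}^N$ is a frame if there are $0<A\le B$ with $A\|f\|^2\le\sum_i|\langle f,f_i\rangle|^2\le B\|f\|^2$ for all $f$; tight if one can take $A=B$; equal norm if $\|f_i\|$ is constant; equiangular if it is equal norm and $|\langle f_i,f_j\rangle|$ is the same constant for all $i\ne j$. $S_Ff=\sum_i\langle f,f_i\rangle f_i$; $S_F^{-1}F=\{S_F^{-1}f_i\}$ is the canonical dual. $G=\{g_i\}_{i=1}^N$ is a dual of $F$ if $f=\sum_i\langle f,g_i\rangle f_i$ for all $f$; $(F,G)$ is then an $(N,n)$ dual pair. A dual pair is $1$-uniform if $\langle f_i,g_i\rangle$ is independent of $i$, and $2$-uniform if it is $1$-uniform and $\langle f_i,g_j\rangle\langle f_j,g_i\rangle$ is the same constant for all $i\ne j$. $\mathcal A_m$ is the set of $m$-element subsets of $\{1,\dots,N\}$; $E_{\Lambda,F,G}f=\sum_{i\in\Lambda}\langle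 f,f_i\rangle g_i$. With $\|T\|_{\mathcal F}=\sqrt{\operatorname{tr}(T^*T)}$: $\epsilon^{(m)}_{F,G}=\max_{\Lambda\in\mathcal A_m}\|E_{\Lambda,F,G}\|_{\mathcal F}$; $\epsilon^{(1)}=\inf\{\epsilon^{(1)}_{F,G}:(F,G)\text{ an }(N,n)\text{ dual pair}\}$; $\mathcal F^{(1)}=\{(F,G):\epsilon^{(1)}_{F,G}=\epsilon^{(1)}\}$; for $m>1$, $\epsilon^{(m)}=\inf\{\epsilon^{(m)}_{F,G}:(F,G)\in\mathcal F^{(m-1)}\}$, $\mathcal F^{(m)}=\{(F,G)\in\mathcal F^{(m-1)}:\epsilon^{(m)}_{F,G}=\epsilon^{(m)}\}$. *)

theory Defs
  imports "HOL-Analysis.Analysis"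
begin

text \<open>The n-dimensional complex Hilbert space is modelled as complex ^ 'n
  (n = CARD('n)), with inner product linear in the first argument.
  Frames are sequences indexed by {1..N}, modelled as functions nat => complex^'n
  (values outside {1..N} are irrelevant).\<close>

type_synonym 'n cvec = "complex ^ 'n"

definition cinner :: "complex ^ 'n \<Rightarrow> complex ^ 'n \<Rightarrow> complex" where
  "cinner x y = (\<Sum>k\<in>UNIV. x $ k * cnj (y $ k))"

definition cnorm :: "complex ^ 'n \<Rightarrow> real" where
  "cnorm x = sqrt (Re (cinner x x))"

definition frame :: "nat \<Rightarrow> (nat \<Rightarrow> complex ^ 'n) \<Rightarrow> bool" where
  "frame N F \<longleftrightarrow> (\<exists>A B. 0 < A \<and> A \<le> B \<and>
     (\<forall>f. A * (cnorm f)^2 \<le> (\<Sum>i\<in>{1..N}. (cmod (cinner f (F i)))^2) \<and>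
          (\<Sum>i\<in>{1..N}. (cmod (cinner f (F i)))^2) \<le> B * (cnorm f)^2))"

definition tight_frame :: "nat \<Rightarrow> (nat \<Rightarrow> complex ^ 'n) \<Rightarrow> bool" where
  "tight_frame N F \<longleftrightarrow> (\<exists>A. 0 < A \<and>
     (\<forall>f. (\<Sum>i\<in>{1..N}. (cmod (cinner f (F i)))^2) = A * (cnorm f)^2))"

definition equal_norm :: "nat \<Rightarrow> (nat \<Rightarrow> complex ^ 'n) \<Rightarrow> bool" where
  "equal_norm N F \<longleftrightarrow> (\<exists>a. \<forall>i\<in>{1..N}. cnorm (F i) = a)"

definition equiangular :: "nat \<Rightarrow> (nat \<Rightarrow> complex ^ 'n) \<Rightarrow> bool" where
  "equiangular N F \<longleftrightarrow> equal_norm N F \<and>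
     (\<exists>b. \<forall>i\<in>{1..N}. \<forall>j\<in>{1..N}. i \<noteq> j \<longrightarrow> cmod (cinner (F i) (F j)) = b)"

definition frame_op :: "nat \<Rightarrow> (nat \<Rightarrow> complex ^ 'n) \<Rightarrow> complex ^ 'n \<Rightarrow> complex ^ 'n" where
  "frame_op N F f = (\<Sum>i\<in>{1..N}. cinner f (F i) *s F i)"

definition canon_dual :: "nat \<Rightarrow> (nat \<Rightarrow> complex ^ 'n) \<Rightarrow> nat \<Rightarrow> complex ^ 'n" where
  "canon_dual N F i = inv (frame_op N F) (F i)"

definition dual_pair :: "nat \<Rightarrow> (nat \<Rightarrow> complex ^ 'n) \<Rightarrow> (nat \<Rightarrow> complex ^ 'n) \<Rightarrow> bool" where
  "dual_pair N F G \<longleftrightarrow> frame N F \<and>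
     (\<forall>f. f = (\<Sum>i\<in>{1..N}. cinner f (G i) *s F i))"

definition one_uniform :: "nat \<Rightarrow> (nat \<Rightarrow> complex ^ 'n) \<Rightarrow> (nat \<Rightarrow> complex ^ 'n) \<Rightarrow> bool" where
  "one_uniform N F G \<longleftrightarrow> (\<exists>c. \<forall>i\<in>{1..N}. cinner (F i) (G i) = c)"

definition two_uniform :: "nat \<Rightarrow> (nat \<Rightarrow> complex ^ 'n) \<Rightarrow> (nat \<Rightarrow> complex ^ 'n) \<Rightarrow> bool" where
  "two_uniform N F G \<longleftrightarrow> dual_pair N F G \<and> one_uniform N F G \<and>
     (\<exists>d. \<forall>i\<in>{1..N}. \<forall>j\<in>{1..N}. i \<noteq> j \<longrightarrow> cinner (F i) (G j) * cinner (F j) (G i) = d)"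

text \<open>Erasure operator and its Frobenius (Hilbert-Schmidt) norm, computed in the
  standard orthonormal basis: sqrt (tr (T* T)) = sqrt (sum_k |T e_k|^2).\<close>
definition erasure :: "nat set \<Rightarrow> (nat \<Rightarrow> complex ^ 'n) \<Rightarrow> (nat \<Rightarrow> complex ^ 'n) \<Rightarrow> complex ^ 'n \<Rightarrow> complex ^ 'n" where
  "erasure L F G f = (\<Sum>i\<in>L. cinner f (F i) *s G i)"

definition frob_norm :: "(complex ^ 'n \<Rightarrow> complex ^ 'n) \<Rightarrow> real" where
  "frob_norm T = sqrt (\<Sum>k\<in>UNIV. (cnorm (T (axis k 1)))^2)"

definition eps :: "nat \<Rightarrow> nat \<Rightarrow> (nat \<Rightarrow> complex ^ 'n) \<Rightarrow> (nat \<Rightarrow> complex ^ 'n) \<Rightarrow> real" where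
  "eps N m F G = Max {frob_norm (erasure L F G) | L. L \<subseteq> {1..N} \<and> card L = m}"

text \<open>optimal_fam N 0 = all (N,n) dual pairs; optimal_fam N m = F^(m) for m >= 1.\<close>
primrec optimal_fam :: "nat \<Rightarrow> nat \<Rightarrow> ((nat \<Rightarrow> complex ^ 'n) \<times> (nat \<Rightarrow> complex ^ 'n)) set" where
  "optimal_fam N 0 = {(F, G). dual_pair N F G}"
| "optimal_fam N (Suc m) = {(F, G) \<in> optimal_fam N m.
      eps N (Suc m) F G = Inf ((\<lambda>(F', G'). eps N (Suc m) F' G') ` optimal_fam N m)}"

end

theory Submission
  imports Defs
begin


lemma cinner_commute: "cinner y x = cnj (cinner x y)"
  by (simp add: cinner_def mult.commute)

lemma cinner_add_left: "cinner (x + y) z = cinner x z + cinner y z"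
  by (simp add: cinner_def distrib_right sum.distrib)

lemma cinner_diff_left: "cinner (x - y) z = cinner x z - cinner y z"
  by (simp add: cinner_def left_diff_distrib sum_subtractf)

lemma cinner_scale_left: "cinner (c *s x) z = c * cinner x z"
  by (simp add: cinner_def sum_distrib_left mult.assoc)

lemma cinner_scale_right: "cinner x (c *s z) = cnj c * cinner x z"
  by (simp add: cinner_def sum_distrib_left mult.assoc mult.left_commute)

lemma cinner_add_right: "cinner x (y + z) = cinner x y + cinner x z"
  by (simp add: cinner_def distrib_left sum.distrib)

lemma cinner_sum_left: "cinner (\<Sum>i\<in>A. f i) z = (\<Sum>i\<in>A. cinner (f i) z)"
  unfolding cinner_def sum_component sum_distrib_right by (rule sum.swap)

lemma cinner_sum_right: "cinner z (\<Sum>i\<in>A. f i) = (\<Sum>i\<in>A. cinner z (f i))"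
  unfolding cinner_def sum_component cnj_sum sum_distrib_left by (rule sum.swap)

lemma cinner_self: "cinner x x = complex_of_real (\<Sum>k\<in>UNIV. (cmod (x $ k))^2)"
proof -
  have "x$k * cnj (x$k) = of_real ((cmod (x$k))^2)" for k by (rule complex_norm_square[symmetric])
  then show ?thesis by (simp add: cinner_def of_real_sum)
qed

lemma cinner_self_Re: "Re (cinner x x) = (\<Sum>k\<in>UNIV. (cmod (x $ k))^2)"
  by (simp add: cinner_self)

lemma cinner_self_nonneg: "0 \<le> Re (cinner x x)"
  by (simp add: cinner_self_Re sum_nonneg)

lemma cinner_self_eq: "cinner x x = complex_of_real (Re (cinner x x))"
  by (simp add: cinner_self)

lemma cinner_self_zero: "cinner x x = 0 \<Longrightarrow> x = 0"
proof -
  assume "cinner x x = 0"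
  then have "(\<Sum>k\<in>UNIV. (cmod (x $ k))^2) = 0" by (simp only: cinner_self of_real_eq_0_iff)
  then have "\<forall>k\<in>UNIV. (cmod (x $ k))^2 = 0"
    by (subst sum_nonneg_eq_0_iff[symmetric]) auto
  then show "x = 0" by (simp add: vec_eq_iff)
qed

lemma cnorm_sq: "(cnorm x)^2 = Re (cinner x x)"
  by (simp add: cnorm_def cinner_self_nonneg)

lemma cnorm_eq_norm: "cnorm x = norm x"
  by (simp add: cnorm_def cinner_self_Re norm_vec_def L2_set_def)

lemma cinner_axis_left: "cinner (axis k 1) y = cnj (y $ k)"
proof -
  have "\<And>ka. (if ka = k then 1 else 0) * cnj (y $ ka) = (if ka = k then cnj (y $ k) else 0)" by simp
  then show ?thesis by (simp add: cinner_def axis_def)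
qed

lemma cmod_cinner_le: "cmod (cinner x y) \<le> cnorm x * cnorm y"
proof -
  have "cmod (cinner x y) \<le> (\<Sum>k\<in>UNIV. cmod (x $ k) * cmod (y $ k))"
    unfolding cinner_def by (rule order_trans[OF norm_sum]) (simp add: norm_mult)
  also have "\<dots> = (\<Sum>k\<in>UNIV. \<bar>cmod (x $ k)\<bar> * \<bar>cmod (y $ k)\<bar>)" by simp
  also have "\<dots> \<le> L2_set (\<lambda>k. cmod (x $ k)) UNIV * L2_set (\<lambda>k. cmod (y $ k)) UNIV"
    by (rule L2_set_mult_ineq)
  also have "\<dots> = cnorm x * cnorm y"
    by (simp add: cnorm_eq_norm norm_vec_def)
  finally show ?thesis .
qed

definition hs :: "nat set \<Rightarrow> (nat \<Rightarrow> complex ^ 'n) \<Rightarrow> (nat \<Rightarrow> complex ^ 'n) \<Rightarrow> complex" where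
  "hs L F G = (\<Sum>i\<in>L. \<Sum>j\<in>L. cinner (F j) (F i) * cinner (G i) (G j))"

lemma frob_erasure: "frob_norm (erasure L F G) = sqrt (Re (hs L F G))"
proof -
  have E: "erasure L F G (axis k 1) = (\<Sum>i\<in>L. cnj (F i $ k) *s G i)" for k
    by (simp add: erasure_def cinner_axis_left)
  have C: "cinner (erasure L F G (axis k 1)) (erasure L F G (axis k 1))
      = (\<Sum>i\<in>L. \<Sum>j\<in>L. (F j $ k * cnj (F i $ k)) * cinner (G i) (G j))" for k
    unfolding E cinner_sum_left cinner_scale_left cinner_sum_right cinner_scale_right
    by (simp add: sum_distrib_left mult_ac) (rule sum.swap)
  have "(\<Sum>k\<in>UNIV. cinner (erasure L F G (axis k 1)) (erasure L F G (axis k 1)))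
      = (\<Sum>i\<in>L. \<Sum>j\<in>L. (\<Sum>k\<in>UNIV. F j $ k * cnj (F i $ k)) * cinner (G i) (G j))"
    unfolding C sum_distrib_right
    by (subst sum.swap, rule sum.cong, simp, subst sum.swap, simp)
  also have "\<dots> = hs L F G" by (simp add: hs_def cinner_def)
  finally have "(\<Sum>k\<in>UNIV. cinner (erasure L F G (axis k 1)) (erasure L F G (axis k 1))) = hs L F G" .
  then have "(\<Sum>k\<in>UNIV. (cnorm (erasure L F G (axis k 1)))^2) = Re (hs L F G)"
    by (simp add: cnorm_sq flip: Re_sum)
  then show ?thesis by (simp add: frob_norm_def)
qed

definition PP :: "(nat \<Rightarrow> complex ^ 'n) \<Rightarrow> (nat \<Rightarrow> complex ^ 'n) \<Rightarrow> nat \<Rightarrow> real" where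
  "PP F G i = Re (cinner (F i) (F i)) * Re (cinner (G i) (G i))"

definition RR :: "(nat \<Rightarrow> complex ^ 'n) \<Rightarrow> (nat \<Rightarrow> complex ^ 'n) \<Rightarrow> nat \<Rightarrow> nat \<Rightarrow> real" where
  "RR F G i j = Re (cinner (F j) (F i) * cinner (G i) (G j))"

lemma RR_sym: "RR F G i j = RR F G j i"
proof -
  have "cinner (F i) (F j) * cinner (G j) (G i) = cnj (cinner (F j) (F i) * cinner (G i) (G j))"
    by (simp add: cinner_commute[of "F i"] cinner_commute[of "G j"])
  then show ?thesis unfolding RR_def by simp
qed

lemma PP_nonneg: "0 \<le> PP F G i"
  by (simp add: PP_def cinner_self_nonneg)

lemma hs_split: "finite L \<Longrightarrow> Re (hs L F G) = (\<Sum>i\<in>L. PP F G i) + (\<Sum>i\<in>L. \<Sum>j\<in>L-{i}. RR F G i j)"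
proof -
  assume fin: "finite L"
  have "hs L F G = (\<Sum>i\<in>L. cinner (F i) (F i) * cinner (G i) (G i)
      + (\<Sum>j\<in>L-{i}. cinner (F j) (F i) * cinner (G i) (G j)))"
    unfolding hs_def by (rule sum.cong[OF refl], subst sum.remove[OF fin], auto)
  moreover have "Re (cinner (F i) (F i) * cinner (G i) (G i)) = PP F G i" for i
    by (subst cinner_self_eq, subst (2) cinner_self_eq) (simp add: PP_def)
  ultimately show ?thesis by (simp add: sum.distrib RR_def)
qed

lemma hs_single: "Re (hs {i} F G) = PP F G i"
  using hs_split[of "{i}" F G] by simp

lemma hs_pair: "i \<noteq> j \<Longrightarrow> Re (hs {i,j} F G) = PP F G i + PP F G j + 2 * RR F G i j"
  using hs_split[of "{i,j}" F G] RR_sym[of F G j i] by (simp add: insert_Diff_if)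

lemma sqrt_PP: "sqrt (PP F G i) = cnorm (F i) * cnorm (G i)"
  by (simp add: PP_def cnorm_def real_sqrt_mult)

lemma Re_le_sqrt_PP: "Re (cinner (F i) (G i)) \<le> sqrt (PP F G i)"
  unfolding sqrt_PP using cmod_cinner_le[of "F i" "G i"] complex_Re_le_cmod order_trans by blast

definition Sm :: "nat \<Rightarrow> nat \<Rightarrow> nat set set" where
  "Sm N m = {L. L \<subseteq> {1..N} \<and> card L = m}"

lemma finite_Sm: "finite (Sm N m)"
  unfolding Sm_def by (rule finite_subset[of _ "Pow {1..N}"]) auto

lemma eps_alt: "eps N m F G = Max ((\<lambda>L. sqrt (Re (hs L F G))) ` Sm N m)"
  unfolding eps_def Sm_def frob_erasure by (rule arg_cong[where f=Max]) auto

lemma eps_ge: "L \<subseteq> {1..N} \<Longrightarrow> card L = m \<Longrightarrow> sqrt (Re (hs L F G)) \<le> eps N m F G"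
  unfolding eps_alt by (rule Max_ge) (auto simp: finite_Sm Sm_def)

lemma eps_le: "L0 \<subseteq> {1..N} \<Longrightarrow> card L0 = m \<Longrightarrow>
   (\<And>L. L \<subseteq> {1..N} \<Longrightarrow> card L = m \<Longrightarrow> sqrt (Re (hs L F G)) \<le> v) \<Longrightarrow> eps N m F G \<le> v"
  unfolding eps_alt by (subst Max_le_iff) (auto simp: finite_Sm Sm_def)

lemma eps_cong: "(\<And>L. L \<subseteq> {1..N} \<Longrightarrow> card L = m \<Longrightarrow> Re (hs L F G) = Re (hs L F' G')) \<Longrightarrow>
   eps N m F G = eps N m F' G'"
  unfolding eps_alt by (rule arg_cong[where f=Max], rule image_cong) (auto simp: Sm_def)

lemma dual_expand: "dual_pair N F G \<Longrightarrow> f = (\<Sum>i\<in>{1..N}. cinner f (G i) *s F i)"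
  unfolding dual_pair_def by blast

lemma dual_trace: fixes F :: "nat \<Rightarrow> complex ^ 'n" assumes "dual_pair N F G"
  shows "(\<Sum>i\<in>{1..N}. cinner (F i) (G i)) = of_nat CARD('n)"
proof -
  have "1 = (\<Sum>i\<in>{1..N}. F i $ k * cnj (G i $ k))" for k :: 'n
  proof -
    have "(axis k 1 :: complex^'n) $ k = (\<Sum>i\<in>{1..N}. cinner (axis k 1) (G i) *s F i) $ k"
      using dual_expand[OF assms, of "axis k 1"] by simp
    then show ?thesis by (simp add: cinner_axis_left mult.commute)
  qed
  then have "(\<Sum>k\<in>(UNIV::'n set). (1::complex)) = (\<Sum>k\<in>UNIV. \<Sum>i\<in>{1..N}. F i $ k * cnj (G i $ k))"
    by simp
  also have "\<dots> = (\<Sum>i\<in>{1..N}. cinner (F i) (G i))"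
    unfolding cinner_def by (rule sum.swap)
  finally show ?thesis by simp
qed

lemma dual_hs: assumes "dual_pair N F G"
  shows "hs {1..N} F G = (\<Sum>j\<in>{1..N}. cinner (F j) (G j))"
proof -
  have "hs {1..N} F G = (\<Sum>j\<in>{1..N}. \<Sum>i\<in>{1..N}. cinner (F j) (F i) * cinner (G i) (G j))"
    unfolding hs_def by (rule sum.swap)
  also have "\<dots> = (\<Sum>j\<in>{1..N}. cinner (F j) (\<Sum>i\<in>{1..N}. cinner (G j) (G i) *s F i))"
    unfolding cinner_sum_right cinner_scale_right
    by (rule sum.cong[OF refl], rule sum.cong[OF refl], subst cinner_commute[of "G _" "G _"], simp add: mult.commute)
  also have "\<dots> = (\<Sum>j\<in>{1..N}. cinner (F j) (G j))"
    using dual_expand[OF assms] by simp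
  finally show ?thesis .
qed

lemma dual_Re_hs: fixes F :: "nat \<Rightarrow> complex ^ 'n" shows "dual_pair N F G \<Longrightarrow> Re (hs {1..N} F G) = real CARD('n)"
  using dual_hs dual_trace by (metis Re_complex_of_real of_real_of_nat_eq)

lemma dual_LB: fixes F :: "nat \<Rightarrow> complex ^ 'n" assumes "dual_pair N F G" "1 \<le> N"
  shows "real CARD('n) / real N \<le> eps N 1 F G"
proof -
  have "real CARD('n) = Re (\<Sum>i\<in>{1..N}. cinner (F i) (G i))"
    using dual_trace[OF assms(1)] by simp
  also have "\<dots> = (\<Sum>i\<in>{1..N}. Re (cinner (F i) (G i)))" by (simp add: Re_sum)
  also have "\<dots> \<le> (\<Sum>i\<in>{1..N}. sqrt (PP F G i))" by (rule sum_mono, rule Re_le_sqrt_PP)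
  also have "\<dots> \<le> (\<Sum>i\<in>{1..N}. eps N 1 F G)"
  proof (rule sum_mono)
    fix i assume "i \<in> {1..N}"
    then show "sqrt (PP F G i) \<le> eps N 1 F G"
      using eps_ge[of "{i}" N 1 F G] hs_single[of i F G] by simp
  qed
  also have "\<dots> = real N * eps N 1 F G" by simp
  finally show ?thesis using assms(2) by (simp add: field_simps)
qed

lemma card_pos: "0 < CARD('a::finite)"
  by (simp add: card_gt_0_iff)

lemma geom_zero: fixes z :: complex assumes "z \<noteq> 1" "z ^ N = 1"
  shows "(\<Sum>i\<in>{1..N}. z ^ i) = 0"
proof -
  have "(\<Sum>i<Suc N. z ^ i) = (z ^ Suc N - 1) / (z - 1)" by (rule geometric_sum[OF assms(1)])
  also have "\<dots> = 1" using assms by simp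
  finally have 1: "(\<Sum>i<Suc N. z ^ i) = 1" .
  have "{..<Suc N} = insert 0 {1..N}" by auto
  then have "(\<Sum>i<Suc N. z ^ i) = 1 + (\<Sum>i\<in>{1..N}. z ^ i)" by simp
  with 1 show ?thesis by simp
qed

lemma root_sum: assumes "a < N" "b < N"
  shows "(\<Sum>i\<in>{1..N}. cis (2*pi*real i*real a/real N) * cnj (cis (2*pi*real i*real b/real N)))
     = (if a = b then of_nat N else 0)"
proof -
  define z where "z = cis (2*pi*(real a - real b)/real N)"
  have N: "N > 0" using assms by simp
  have t: "cis (2*pi*real i*real a/real N) * cnj (cis (2*pi*real i*real b/real N)) = z ^ i" for i
  proof -
    have "cis (2*pi*real i*real a/real N) * cnj (cis (2*pi*real i*real b/real N))
       = cis (2*pi*real i*real a/real N - 2*pi*real i*real b/real N)"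
      by (simp add: cis_cnj cis_mult)
    also have "2*pi*real i*real a/real N - 2*pi*real i*real b/real N = real i * (2*pi*(real a - real b)/real N)"
      using N by (simp add: field_simps)
    also have "cis (real i * (2*pi*(real a - real b)/real N)) = z ^ i"
      by (simp only: z_def Complex.DeMoivre)
    finally show ?thesis .
  qed
  show ?thesis
  proof (cases "a = b")
    case True then show ?thesis by (simp add: cis_cnj cis_mult)
  next
    case False
    have zN: "z ^ N = 1"
    proof -
      have "z ^ N = cis (2*pi*real_of_int (int a - int b))"
        using N by (simp add: z_def Complex.DeMoivre)
      also have "\<dots> = 1" by (rule cis_multiple_2pi) simp
      finally show ?thesis .
    qed
    have z1: "z \<noteq> 1"
    proof
      assume "z = 1"
      then have "cos (2 * pi * (real a - real b) / real N) = 1"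
        by (simp add: z_def complex_eq_iff)
      then obtain m :: int where "2 * pi * (real a - real b) / real N = real_of_int m * 2 * pi"
        by (subst (asm) cos_one_2pi_int) blast
      hence "real_of_int (int a - int b) = real_of_int (m * int N)"
        unfolding of_int_diff of_int_mult using N
        by (simp add: nonzero_divide_eq_eq)
      also note of_int_eq_iff
      finally have *: "abs m * N = abs (int a - int b)" by (simp add: abs_mult)
      also have "\<dots> < int N" using assms by linarith
      finally have "m = 0" using N by simp
      with * False show False by simp
    qed
    show ?thesis using False geom_zero[OF z1 zN] by (simp add: t)
  qed
qed

lemma sum_scale_vec: fixes c :: complex and v :: "'b \<Rightarrow> complex ^ 'n"
  shows "(\<Sum>i\<in>A. (c * x i) *s v i) = c *s (\<Sum>i\<in>A. x i *s v i)"
  by (induction A rule: infinite_finite_induct) (simp_all add: vector_add_ldistrib vector_smult_assoc)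

lemma frame_quad: "(\<Sum>i\<in>{1..N}. (cmod (cinner f (F i)))^2) = Re (cinner (frame_op N F f) f)"
proof -
  have "cinner (frame_op N F f) f = (\<Sum>i\<in>{1..N}. cinner f (F i) * cnj (cinner f (F i)))"
    unfolding frame_op_def cinner_sum_left cinner_scale_left
    by (simp add: cinner_commute[of "F _" f])
  also have "\<dots> = (\<Sum>i\<in>{1..N}. complex_of_real ((cmod (cinner f (F i)))^2))"
    by (rule sum.cong[OF refl], rule complex_norm_square[symmetric])
  finally show ?thesis by (simp flip: of_real_sum)
qed

lemma scaled_dual: assumes op: "\<And>f. frame_op N F f = complex_of_real a *s f" and a: "a > 0"
  shows "dual_pair N F (\<lambda>i. complex_of_real (1/a) *s F i)"
  unfolding dual_pair_def
proof
  have "(\<Sum>i\<in>{1..N}. (cmod (cinner f (F i)))^2) = a * (cnorm f)^2" for f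
    unfolding frame_quad op cinner_scale_left cnorm_sq
    by (subst cinner_self_eq) simp
  then show "frame N F" unfolding frame_def using a by (intro exI[of _ a]) auto
next
  show "\<forall>f. f = (\<Sum>i\<in>{1..N}. cinner f (complex_of_real (1 / a) *s F i) *s F i)"
  proof
    fix f
    have "(\<Sum>i\<in>{1..N}. cinner f (complex_of_real (1 / a) *s F i) *s F i)
        = complex_of_real (1/a) *s frame_op N F f"
    proof -
      have "cinner f (complex_of_real (1 / a) *s F i) = complex_of_real (1/a) * cinner f (F i)" for i
        by (simp add: cinner_scale_right)
      then show ?thesis unfolding frame_op_def by (simp only: sum_scale_vec)
    qed
    also have "\<dots> = f" using a by (simp add: op vector_smult_assoc)
    finally show "f = (\<Sum>i\<in>{1..N}. cinner f (complex_of_real (1 / a) *s F i) *s F i)" by simp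
  qed
qed

lemma cinner_self_scale: "Re (cinner (c *s x) (c *s x)) = (cmod c)^2 * Re (cinner x x)"
proof -
  have "cinner (c *s x) (c *s x) = (c * cnj c) * cinner x x"
    by (simp add: cinner_scale_left cinner_scale_right mult_ac)
  also have "\<dots> = complex_of_real ((cmod c)^2) * cinner x x"
    by (simp only: complex_norm_square)
  finally show ?thesis by simp
qed

lemma harmonic: assumes "CARD('n) \<le> N"
  shows "\<exists>F G :: nat \<Rightarrow> complex ^ 'n. dual_pair N F G \<and>
     (\<forall>i\<in>{1..N}. PP F G i = (real CARD('n) / real N)^2)"
proof -
  obtain idx :: "'n \<Rightarrow> nat" where bij: "bij_betw idx UNIV {0..<CARD('n)}"
    using ex_bij_betw_finite_nat[of "UNIV :: 'n set"] by auto
  have idxN: "idx k < N" for k using bij assms unfolding bij_betw_def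
    by (metis atLeastLessThan_iff rangeI order_less_le_trans)
  have inj: "idx k = idx l \<longleftrightarrow> k = l" for k l using bij unfolding bij_betw_def inj_on_def by auto
  have N: "N > 0" using assms card_pos[where 'a='n] by linarith
  define H :: "nat \<Rightarrow> complex ^ 'n" where "H i = (\<chi> k. cis (2*pi*real i*real (idx k)/real N))" for i
  have op: "frame_op N H f = complex_of_real (real N) *s f" for f
  proof -
    have "frame_op N H f $ k = of_nat N * f $ k" for k
    proof -
      have "frame_op N H f $ k = (\<Sum>i\<in>{1..N}. \<Sum>l\<in>UNIV. f $ l * (H i $ k * cnj (H i $ l)))"
        by (simp add: frame_op_def cinner_def sum_distrib_left mult_ac)
      also have "\<dots> = (\<Sum>l\<in>UNIV. f $ l * (\<Sum>i\<in>{1..N}. H i $ k * cnj (H i $ l)))"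
        by (subst sum.swap) (simp add: sum_distrib_left)
      also have "\<dots> = (\<Sum>l\<in>UNIV. f $ l * (if k = l then of_nat N else 0))"
      proof (rule sum.cong[OF refl])
        fix l
        have "(\<Sum>i\<in>{1..N}. H i $ k * cnj (H i $ l)) = (if k = l then of_nat N else 0)"
          using root_sum[OF idxN[of k] idxN[of l]] by (simp add: H_def inj)
        then show "f $ l * (\<Sum>i\<in>{1..N}. H i $ k * cnj (H i $ l)) = f $ l * (if k = l then of_nat N else 0)"
          by simp
      qed
      also have "\<dots> = of_nat N * f $ k" by (simp add: if_distrib[of "\<lambda>x. _ * x"] cong: if_cong)
      finally show ?thesis .
    qed
    then show ?thesis by (simp add: vec_eq_iff)
  qed
  have HH: "Re (cinner (H i) (H i)) = real CARD('n)" for i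
    by (simp add: cinner_self_Re H_def)
  have D: "dual_pair N H (\<lambda>i. complex_of_real (1/real N) *s H i)"
    by (rule scaled_dual[OF op]) (use N in simp)
  have P: "PP H (\<lambda>i. complex_of_real (1/real N) *s H i) i = (real CARD('n) / real N)^2" for i
      unfolding PP_def cinner_self_scale HH by (simp add: power2_eq_square norm_divide)
  show ?thesis
    by (rule exI[of _ H], rule exI[of _ "\<lambda>i. complex_of_real (1/real N) *s H i"]) (use D P in simp)
qed

lemma all_eq_from_sum: fixes f :: "'a \<Rightarrow> real"
  assumes "finite A" "\<And>x. x \<in> A \<Longrightarrow> f x \<le> c" "(\<Sum>x\<in>A. c) \<le> (\<Sum>x\<in>A. f x)" "x \<in> A"
  shows "f x = c"
proof -
  have "(\<Sum>x\<in>A. c - f x) \<le> 0" using assms(3) by (simp add: sum_subtractf)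
  moreover have "(\<Sum>x\<in>A. c - f x) \<ge> 0" using assms(2) by (simp add: sum_nonneg)
  ultimately have "(\<Sum>x\<in>A. c - f x) = 0" by simp
  then have "\<forall>x\<in>A. c - f x = 0" using assms(1,2) by (subst sum_nonneg_eq_0_iff[symmetric]) auto
  then show ?thesis using assms(4) by simp
qed

lemma card_one_sub: "L \<subseteq> {1..N} \<Longrightarrow> card L = 1 \<Longrightarrow> \<exists>i\<in>{1..N}. L = {i}"
  by (auto simp: card_1_singleton_iff)

lemma opt0: "optimal_fam N 0 = {(F, G). dual_pair N F G}" by simp

lemma PPq_eps: fixes F :: "nat \<Rightarrow> complex ^ 'n"
  assumes "CARD('n) \<le> N" "dual_pair N F G" "\<forall>i\<in>{1..N}. PP F G i = (real CARD('n) / real N)^2"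
  shows "eps N 1 F G = real CARD('n) / real N"
proof (rule antisym)
  have N: "1 \<le> N" using assms(1) card_pos[where 'a='n] by linarith
  show "eps N 1 F G \<le> real CARD('n) / real N"
  proof (rule eps_le[of "{1}"])
    show "{1} \<subseteq> {1..N}" using N by simp
    fix L assume "L \<subseteq> {1..N}" "card L = 1"
    then obtain i where "i \<in> {1..N}" "L = {i}" using card_one_sub by blast
    then show "sqrt (Re (hs L F G)) \<le> real CARD('n) / real N"
      using assms(3) by (simp add: hs_single)
  qed simp
  show "real CARD('n) / real N \<le> eps N 1 F G" by (rule dual_LB[OF assms(2) N])
qed

lemma opt1_iff: fixes F :: "nat \<Rightarrow> complex ^ 'n"
  assumes "CARD('n) \<le> N"
  shows "(F, G) \<in> optimal_fam N 1 \<longleftrightarrow> dual_pair N F G \<and> eps N 1 F G = real CARD('n) / real N"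
proof -
  have N: "1 \<le> N" using assms(1) card_pos[where 'a='n] by linarith
  have "Inf ((\<lambda>(F', G'). eps N 1 F' G') ` (optimal_fam N 0 :: ((nat \<Rightarrow> complex ^ 'n) \<times> _) set))
      = real CARD('n) / real N"
  proof (rule cInf_eq_minimum)
    obtain H K :: "nat \<Rightarrow> complex ^ 'n" where HK: "dual_pair N H K"
      "\<forall>i\<in>{1..N}. PP H K i = (real CARD('n) / real N)^2"
      using harmonic[OF assms] by blast
    have "eps N 1 H K = real CARD('n) / real N" by (rule PPq_eps[OF assms HK])
    then show "real CARD('n) / real N \<in> (\<lambda>(F', G'). eps N 1 F' G') ` (optimal_fam N 0 :: ((nat \<Rightarrow> complex ^ 'n) \<times> _) set)"
      using HK by (auto intro!: image_eqI[of _ _ "(H, K)"])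
    fix x assume "x \<in> (\<lambda>(F', G'). eps N 1 F' G') ` (optimal_fam N 0 :: ((nat \<Rightarrow> complex ^ 'n) \<times> _) set)"
    then show "real CARD('n) / real N \<le> x" using dual_LB N by auto
  qed
  moreover have "(optimal_fam N 1 :: ((nat \<Rightarrow> complex ^ 'n) \<times> _) set) = {(F, G) \<in> optimal_fam N 0. eps N 1 F G =
      Inf ((\<lambda>(F', G'). eps N 1 F' G') ` (optimal_fam N 0 :: ((nat \<Rightarrow> complex ^ 'n) \<times> _) set))}"
    by (simp only: One_nat_def optimal_fam.simps(2))
  ultimately show ?thesis by simp
qed

lemma opt1_PP: fixes F :: "nat \<Rightarrow> complex ^ 'n"
  assumes "CARD('n) \<le> N" "(F, G) \<in> optimal_fam N 1" "i \<in> {1..N}"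
  shows "PP F G i = (real CARD('n) / real N)^2"
proof -
  let ?q = "real CARD('n) / real N"
  have N: "1 \<le> N" using assms(1) card_pos[where 'a='n] by linarith
  have D: "dual_pair N F G" and E: "eps N 1 F G = ?q" using assms(2) opt1_iff[OF assms(1)] by auto
  have le: "sqrt (PP F G j) \<le> ?q" if "j \<in> {1..N}" for j
    using eps_ge[of "{j}" N 1 F G] that E by (simp add: hs_single)
  have "(\<Sum>j\<in>{1..N}. ?q) = real CARD('n)" using N by simp
  also have "\<dots> = (\<Sum>j\<in>{1..N}. Re (cinner (F j) (G j)))"
    using dual_trace[OF D] by (simp flip: Re_sum)
  also have "\<dots> \<le> (\<Sum>j\<in>{1..N}. sqrt (PP F G j))" by (rule sum_mono, rule Re_le_sqrt_PP)
  finally have "sqrt (PP F G i) = ?q" by (intro all_eq_from_sum[OF _ le _ assms(3)]) auto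
  then have "(sqrt (PP F G i))^2 = ?q^2" by simp
  then show ?thesis using PP_nonneg[of F G i] by simp
qed

lemma opt1_sumR: fixes F :: "nat \<Rightarrow> complex ^ 'n"
  assumes "CARD('n) \<le> N" "(F, G) \<in> optimal_fam N 1"
  shows "(\<Sum>i\<in>{1..N}. \<Sum>j\<in>{1..N}-{i}. RR F G i j) = real CARD('n) - real N * (real CARD('n) / real N)^2"
proof -
  have D: "dual_pair N F G" using assms(2) opt1_iff[OF assms(1)] by auto
  have "real CARD('n) = (\<Sum>i\<in>{1..N}. PP F G i) + (\<Sum>i\<in>{1..N}. \<Sum>j\<in>{1..N}-{i}. RR F G i j)"
    using dual_Re_hs[OF D] hs_split[of "{1..N}" F G] by simp
  moreover have "(\<Sum>i\<in>{1..N}. PP F G i) = real N * (real CARD('n) / real N)^2"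
    using opt1_PP[OF assms] by simp
  ultimately show ?thesis by simp
qed

lemma sum_offdiag_const: fixes N :: nat shows "(\<Sum>i\<in>{1..N}. \<Sum>j\<in>{1..N}-{i}. (c::real)) = real N * (real N - 1) * c"
proof -
  have "(\<Sum>i\<in>{1..N}. \<Sum>j\<in>{1..N}-{i}. c) = (\<Sum>i\<in>{1..N}. (real N - 1) * c)"
    by (rule sum.cong[OF refl]) (simp add: of_nat_diff)
  then show ?thesis by simp
qed

lemma offdiag_Sigma: fixes N :: nat shows "(\<Sum>i\<in>{1..N}. \<Sum>j\<in>{1..N}-{i}. f i j) = (\<Sum>(i,j)\<in>Sigma {1..N} (\<lambda>i. {1..N}-{i}). f i j)"
  by (rule sum.Sigma) auto

lemma finite_offdiag: fixes N :: nat shows "finite (Sigma {1..N} (\<lambda>i. {1..N}-{i}))" by auto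

lemma card_two_sub: fixes N :: nat shows "L \<subseteq> {1..N} \<Longrightarrow> card L = 2 \<Longrightarrow> \<exists>i\<in>{1..N}. \<exists>j\<in>{1..N}. i \<noteq> j \<and> L = {i,j}"
  by (auto simp: card_2_iff)

lemma opt1_pairval: fixes F :: "nat \<Rightarrow> complex ^ 'n"
  assumes "CARD('n) \<le> N" "(F, G) \<in> optimal_fam N 1" "i \<in> {1..N}" "j \<in> {1..N}" "i \<noteq> j"
  shows "Re (hs {i,j} F G) = 2 * (real CARD('n) / real N)^2 + 2 * RR F G i j"
  using hs_pair[OF assms(5), of F G] opt1_PP[OF assms(1,2) assms(3)] opt1_PP[OF assms(1,2) assms(4)] by simp

lemma opt2_iff:
  fixes F' :: "nat \<Rightarrow> complex ^ 'n" and F :: "nat \<Rightarrow> complex ^ 'n" and c :: real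
  assumes N: "CARD('n) \<le> N" "2 \<le> N"
    and F': "(F', G') \<in> optimal_fam N 1" "\<forall>i\<in>{1..N}. \<forall>j\<in>{1..N}. i \<noteq> j \<longrightarrow> RR F' G' i j = c"
  shows "(F, G) \<in> optimal_fam N 2 \<longleftrightarrow>
     (F, G) \<in> optimal_fam N 1 \<and> (\<forall>i\<in>{1..N}. \<forall>j\<in>{1..N}. i \<noteq> j \<longrightarrow> RR F G i j = c)"
proof -
  define q where "q = real CARD('n) / real N"
  define v where "v = sqrt (2 * q^2 + 2 * c)"
  define S where "S = Sigma {1..N} (\<lambda>i. {1..N}-{i})"
  have S12: "(1,2) \<in> S" using N(2) by (auto simp: S_def)
  have sumc: "real N * (real N - 1) * c = real CARD('n) - real N * q^2"
  proof -
    have "(\<Sum>i\<in>{1..N}. \<Sum>j\<in>{1..N}-{i}. RR F' G' i j) = (\<Sum>i\<in>{1..N}. \<Sum>j\<in>{1..N}-{i}. c)"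
      by (rule sum.cong[OF refl], rule sum.cong[OF refl]) (use F'(2) in auto)
    then show ?thesis using opt1_sumR[OF N(1) F'(1)] sum_offdiag_const[where N=N and c=c]
      unfolding q_def by simp
  qed
  have Rsum: "(\<Sum>(i,j)\<in>S. RR F1 G1 i j) = (\<Sum>(i,j)\<in>S. c)"
    if "(F1, G1) \<in> optimal_fam N 1" for F1 :: "nat \<Rightarrow> complex ^ 'n" and G1
    using opt1_sumR[OF N(1) that] sum_offdiag_const[where N=N and c=c] sumc unfolding q_def S_def offdiag_Sigma
    by simp
  have L12: "{1,2} \<subseteq> {1..N}" "card {1::nat,2} = 2" using N(2) by auto
  have up: "eps N 2 F1 G1 = v" if "(F1, G1) \<in> optimal_fam N 1"
     "\<forall>i\<in>{1..N}. \<forall>j\<in>{1..N}. i \<noteq> j \<longrightarrow> RR F1 G1 i j = c" for F1 :: "nat \<Rightarrow> complex ^ 'n" and G1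
  proof (rule antisym)
    show "eps N 2 F1 G1 \<le> v"
    proof (rule eps_le[OF L12])
      fix L assume "L \<subseteq> {1..N}" "card L = 2"
      then obtain i j where "i \<in> {1..N}" "j \<in> {1..N}" "i \<noteq> j" "L = {i,j}" using card_two_sub by blast
      then show "sqrt (Re (hs L F1 G1)) \<le> v"
        using opt1_pairval[OF N(1) that(1)] that(2) by (simp add: v_def q_def)
    qed
    show "v \<le> eps N 2 F1 G1"
      using eps_ge[OF L12, of F1 G1] opt1_pairval[OF N(1) that(1), of 1 2] that(2) N(2)
      by (simp add: v_def q_def)
  qed
  have lo: "v \<le> eps N 2 F1 G1" if "(F1, G1) \<in> optimal_fam N 1" for F1 :: "nat \<Rightarrow> complex ^ 'n" and G1
  proof -
    have "\<exists>(i,j)\<in>S. c \<le> RR F1 G1 i j"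
    proof (rule ccontr)
      assume "\<not> ?thesis"
      then have lt: "\<And>p. p \<in> S \<Longrightarrow> (\<lambda>(i,j). RR F1 G1 i j) p < (\<lambda>(i,j). c) p" by auto
      have "(\<Sum>(i,j)\<in>S. RR F1 G1 i j) < (\<Sum>(i,j)\<in>S. c)"
      proof (rule sum_strict_mono)
        show "finite S" by (simp add: S_def finite_offdiag)
        show "S \<noteq> {}" using S12 by auto
      qed (use lt in auto)
      with Rsum[OF that] show False by simp
    qed
    then obtain i j where ij: "(i,j) \<in> S" "c \<le> RR F1 G1 i j" by blast
    then have ij': "i \<in> {1..N}" "j \<in> {1..N}" "i \<noteq> j" by (auto simp: S_def)
    have "card {i,j} = 2" "{i,j} \<subseteq> {1..N}" using ij' by auto
    then have "sqrt (Re (hs {i,j} F1 G1)) \<le> eps N 2 F1 G1" by (rule eps_ge[rotated])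
    moreover have "v \<le> sqrt (Re (hs {i,j} F1 G1))"
      using opt1_pairval[OF N(1) that ij'] ij(2) by (simp add: v_def q_def)
    ultimately show ?thesis by simp
  qed
  have Inf: "Inf ((\<lambda>(F', G'). eps N 2 F' G') ` (optimal_fam N 1 :: ((nat \<Rightarrow> complex ^ 'n) \<times> _) set)) = v"
  proof (rule cInf_eq_minimum)
    show "v \<in> (\<lambda>(F', G'). eps N 2 F' G') ` (optimal_fam N 1 :: ((nat \<Rightarrow> complex ^ 'n) \<times> _) set)"
      using up[OF F'] F'(1) by (auto intro!: image_eqI[of _ _ "(F', G')"])
    fix x assume "x \<in> (\<lambda>(F', G'). eps N 2 F' G') ` (optimal_fam N 1 :: ((nat \<Rightarrow> complex ^ 'n) \<times> _) set)"
    then show "v \<le> x" using lo by auto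
  qed
  have O2: "(optimal_fam N 2 :: ((nat \<Rightarrow> complex ^ 'n) \<times> _) set) = {(F, G) \<in> optimal_fam N 1. eps N 2 F G =
      Inf ((\<lambda>(F', G'). eps N 2 F' G') ` (optimal_fam N 1 :: ((nat \<Rightarrow> complex ^ 'n) \<times> _) set))}"
    by (simp only: numeral_2_eq_2 One_nat_def optimal_fam.simps(2))
  show ?thesis
  proof
    assume "(F, G) \<in> optimal_fam N 2"
    then have "(F, G) \<in> optimal_fam N 1 \<and> eps N 2 F G = v" unfolding O2 Inf by simp
    then have o1: "(F, G) \<in> optimal_fam N 1" and e: "eps N 2 F G = v" by auto
    have le: "(\<lambda>(i,j). RR F G i j) p \<le> c" if "p \<in> S" for p
    proof -
      obtain i j where p: "p = (i,j)" by force
      with that have ij': "i \<in> {1..N}" "j \<in> {1..N}" "i \<noteq> j" by (auto simp: S_def)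
      have "card {i,j} = 2" "{i,j} \<subseteq> {1..N}" using ij' by auto
      then have "sqrt (Re (hs {i,j} F G)) \<le> v" using eps_ge[of "{i,j}" N 2 F G] e by simp
      then have "sqrt (2 * q^2 + 2 * RR F G i j) \<le> sqrt (2 * q^2 + 2 * c)"
        using opt1_pairval[OF N(1) o1 ij'] by (simp add: v_def q_def)
      then show ?thesis using p by simp
    qed
    have finS: "finite S" by (simp add: S_def finite_offdiag)
    have eqs: "(\<Sum>x\<in>S. (\<lambda>(i,j). RR F G i j) x) = (\<Sum>x\<in>S. c)"
      using Rsum[OF o1] by (simp add: case_prod_unfold)
    then have ge: "(\<Sum>x\<in>S. c) \<le> (\<Sum>x\<in>S. (\<lambda>(i,j). RR F G i j) x)" by simp
    have "\<forall>p\<in>S. (\<lambda>(i,j). RR F G i j) p = c"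
    proof
      fix p assume "p \<in> S"
      show "(\<lambda>(i,j). RR F G i j) p = c"
        by (rule all_eq_from_sum[OF finS le ge \<open>p \<in> S\<close>])
    qed
    then show "(F, G) \<in> optimal_fam N 1 \<and> (\<forall>i\<in>{1..N}. \<forall>j\<in>{1..N}. i \<noteq> j \<longrightarrow> RR F G i j = c)"
      using o1 by (auto simp: S_def)
  next
    assume "(F, G) \<in> optimal_fam N 1 \<and> (\<forall>i\<in>{1..N}. \<forall>j\<in>{1..N}. i \<noteq> j \<longrightarrow> RR F G i j = c)"
    then have "eps N 2 F G = v" using up[of F G] by blast
    then show "(F, G) \<in> optimal_fam N 2" unfolding O2 Inf
      using \<open>(F, G) \<in> optimal_fam N 1 \<and> _\<close> by simp
  qed
qed

lemma opt2_val:
  fixes F' :: "nat \<Rightarrow> complex ^ 'n" and F :: "nat \<Rightarrow> complex ^ 'n" and c :: real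
  assumes N: "CARD('n) \<le> N" "2 \<le> N"
    and F': "(F', G') \<in> optimal_fam N 1" "\<forall>i\<in>{1..N}. \<forall>j\<in>{1..N}. i \<noteq> j \<longrightarrow> RR F' G' i j = c"
    and FG: "(F, G) \<in> optimal_fam N 2" and L: "L \<subseteq> {1..N}"
  shows "Re (hs L F G) = (\<Sum>i\<in>L. (real CARD('n) / real N)^2) + (\<Sum>i\<in>L. \<Sum>j\<in>L-{i}. c)"
proof -
  have oR: "(F, G) \<in> optimal_fam N 1 \<and> (\<forall>i\<in>{1..N}. \<forall>j\<in>{1..N}. i \<noteq> j \<longrightarrow> RR F G i j = c)"
    by (rule opt2_iff[OF N F', of F G, THEN iffD1, OF FG])
  have o: "(F, G) \<in> optimal_fam N 1" using oR by (rule conjunct1)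
  have R: "\<forall>i\<in>{1..N}. \<forall>j\<in>{1..N}. i \<noteq> j \<longrightarrow> RR F G i j = c" using oR by (rule conjunct2)
  have fin: "finite L" using L by (rule finite_subset) simp
  have "(\<Sum>i\<in>L. PP F G i) = (\<Sum>i\<in>L. (real CARD('n) / real N)^2)"
  proof (rule sum.cong[OF refl])
    fix i assume "i \<in> L"
    then have "i \<in> {1..N}" using L by blast
    then show "PP F G i = (real CARD('n) / real N)^2" by (rule opt1_PP[OF N(1) o])
  qed
  moreover have "(\<Sum>i\<in>L. \<Sum>j\<in>L-{i}. RR F G i j) = (\<Sum>i\<in>L. \<Sum>j\<in>L-{i}. c)"
  proof (rule sum.cong[OF refl], rule sum.cong[OF refl])
    fix i j assume ij: "i \<in> L" "j \<in> L - {i}"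
    then have "i \<in> {1..N}" "j \<in> {1..N}" "i \<noteq> j" using L by auto
    then show "RR F G i j = c" using R by simp
  qed
  ultimately show ?thesis using hs_split[OF fin, of F G] by linarith
qed

lemma optm:
  fixes F' :: "nat \<Rightarrow> complex ^ 'n" and c :: real
  assumes N: "CARD('n) \<le> N" "2 \<le> N"
    and F': "(F', G') \<in> optimal_fam N 1" "\<forall>i\<in>{1..N}. \<forall>j\<in>{1..N}. i \<noteq> j \<longrightarrow> RR F' G' i j = c"
    and m: "2 \<le> m"
  shows "(optimal_fam N m :: ((nat \<Rightarrow> complex ^ 'n) \<times> _) set) = optimal_fam N 2"
  using m
proof (induction m rule: nat_induct_at_least)
  case base then show ?case by (rule refl)
next
  case (Suc m)
  have F'2: "(F', G') \<in> optimal_fam N 2" by (rule opt2_iff[OF N F', of F' G', THEN iffD2]) (use F' in simp)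
  have K: "eps N k F1 G1 = eps N k F' G'" if "(F1, G1) \<in> optimal_fam N 2" for k and F1 :: "nat \<Rightarrow> complex ^ 'n" and G1
  proof (rule eps_cong)
    fix L assume "L \<subseteq> {1..N}"
    then show "Re (hs L F1 G1) = Re (hs L F' G')"
      using opt2_val[OF N F' that] opt2_val[OF N F' F'2] by simp
  qed
  have img: "(\<lambda>(F1, G1). eps N (Suc m) F1 G1) ` (optimal_fam N 2 :: ((nat \<Rightarrow> complex ^ 'n) \<times> _) set)
      = {eps N (Suc m) F' G'}"
  proof
    show "(\<lambda>(F1, G1). eps N (Suc m) F1 G1) ` (optimal_fam N 2 :: ((nat \<Rightarrow> complex ^ 'n) \<times> _) set) \<subseteq> {eps N (Suc m) F' G'}"
      using K by fastforce
    show "{eps N (Suc m) F' G'} \<subseteq> (\<lambda>(F1, G1). eps N (Suc m) F1 G1) ` (optimal_fam N 2 :: ((nat \<Rightarrow> complex ^ 'n) \<times> _) set)"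
      using F'2 by force
  qed
  have "(optimal_fam N (Suc m) :: ((nat \<Rightarrow> complex ^ 'n) \<times> _) set)
      = {(F1, G1) \<in> optimal_fam N 2. eps N (Suc m) F1 G1 = eps N (Suc m) F' G'}"
    by (simp only: optimal_fam.simps(2) Suc.IH img cInf_singleton)
  also have "\<dots> = optimal_fam N 2" using K by fastforce
  finally show ?case .
qed



lemma frame_op_add: "frame_op N F (x + y) = frame_op N F x + frame_op N F y"
  by (simp add: frame_op_def cinner_add_left vector_sadd_rdistrib sum.distrib)

lemma frame_op_scale: "frame_op N F (c *s x) = c *s frame_op N F x"
  by (simp add: frame_op_def cinner_scale_left sum_scale_vec)

lemma frame_op_self: "cinner (frame_op N F f) f = complex_of_real (\<Sum>i\<in>{1..N}. (cmod (cinner f (F i)))^2)"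
proof -
  have "cinner (frame_op N F f) f = (\<Sum>i\<in>{1..N}. cinner f (F i) * cnj (cinner f (F i)))"
    unfolding frame_op_def cinner_sum_left cinner_scale_left
    by (simp add: cinner_commute[of "F _" f])
  also have "\<dots> = (\<Sum>i\<in>{1..N}. complex_of_real ((cmod (cinner f (F i)))^2))"
    by (rule sum.cong[OF refl], rule complex_norm_square[symmetric])
  finally show ?thesis by (simp only: of_real_sum)
qed

lemma polar: fixes T :: "complex^'n \<Rightarrow> complex^'n"
  assumes add: "\<And>x y. T (x + y) = T x + T y" and sc: "\<And>c x. T (c *s x) = c *s T x"
    and z: "\<And>x. cinner (T x) x = 0"
  shows "T x = 0"
proof -
  have a: "cinner (T x) y + cinner (T y) x = 0" for x y
  proof -
    have "0 = cinner (T (x+y)) (x+y)" using z by simp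
    also have "\<dots> = cinner (T x) x + cinner (T x) y + cinner (T y) x + cinner (T y) y"
      by (simp add: add cinner_add_left cinner_add_right)
    finally show ?thesis using z[of x] z[of y] by simp
  qed
  have b: "cinner (T x) y - cinner (T y) x = 0" for x y
  proof -
    have "0 = cinner (T x) (\<i> *s y) + cinner (T (\<i> *s y)) x" by (rule a[symmetric])
    also have "\<dots> = - \<i> * cinner (T x) y + \<i> * cinner (T y) x"
      by (simp add: sc cinner_scale_left cinner_scale_right)
    finally have "\<i> * (cinner (T x) y - cinner (T y) x) = 0" by (simp add: algebra_simps)
    then show ?thesis by simp
  qed
  have "2 * cinner (T x) (T x) = 0"
    using a[of x "T x"] b[of x "T x"] by (simp add: algebra_simps)
  then have "cinner (T x) (T x) = 0" by simp
  then show ?thesis by (rule cinner_self_zero)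
qed

lemma tight_op: assumes "tight_frame N F"
  shows "\<exists>A>0. \<forall>f. frame_op N F f = complex_of_real A *s f"
proof -
  obtain A where A: "A > 0" "\<And>f. (\<Sum>i\<in>{1..N}. (cmod (cinner f (F i)))^2) = A * (cnorm f)^2"
    using assms unfolding tight_frame_def by blast
  let ?T = "\<lambda>f. frame_op N F f - complex_of_real A *s f"
  have z: "cinner (?T f) f = 0" for f
  proof -
    have "cinner (frame_op N F f) f = complex_of_real (A * Re (cinner f f))"
      unfolding frame_op_self A(2) cnorm_sq ..
    also have "\<dots> = complex_of_real A * cinner f f"
      by (subst (2) cinner_self_eq) simp
    finally show ?thesis by (simp add: cinner_diff_left cinner_scale_left)
  qed
  have "?T f = 0" for f
  proof (rule polar[of ?T])
    show "?T (x + y) = ?T x + ?T y" for x y by (simp add: frame_op_add vector_add_ldistrib)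
    show "?T (c *s x) = c *s ?T x" for c x
      by (simp add: frame_op_scale vector_smult_assoc vector_ssub_ldistrib mult.commute)
    show "cinner (?T x) x = 0" for x by (rule z)
  qed
  then show ?thesis using A(1) by (intro exI[of _ A]) auto
qed

lemma const_inj1: assumes "inj_on \<phi> D" "\<forall>i\<in>I. h i \<in> D"
  shows "(\<exists>c. \<forall>i\<in>I. \<phi> (h i) = c) \<longleftrightarrow> (\<exists>c. \<forall>i\<in>I. h i = c)"
proof
  assume "\<exists>c. \<forall>i\<in>I. \<phi> (h i) = c"
  then obtain c where c: "\<forall>i\<in>I. \<phi> (h i) = c" by blast
  show "\<exists>c. \<forall>i\<in>I. h i = c"
  proof (cases "I = {}")
    case False
    then obtain i0 where i0: "i0 \<in> I" by blast
    have "h i = h i0" if "i \<in> I" for i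
      using c i0 that assms inj_onD[OF assms(1), of "h i" "h i0"] by auto
    then show ?thesis by blast
  qed simp
qed auto

lemma const_inj2: assumes "inj_on \<phi> D" "\<forall>i\<in>I. \<forall>j\<in>I. i \<noteq> j \<longrightarrow> h i j \<in> D"
  shows "(\<exists>c. \<forall>i\<in>I. \<forall>j\<in>I. i \<noteq> j \<longrightarrow> \<phi> (h i j) = c) \<longleftrightarrow> (\<exists>c. \<forall>i\<in>I. \<forall>j\<in>I. i \<noteq> j \<longrightarrow> h i j = c)"
proof
  assume "\<exists>c. \<forall>i\<in>I. \<forall>j\<in>I. i \<noteq> j \<longrightarrow> \<phi> (h i j) = c"
  then obtain c where c: "\<forall>i\<in>I. \<forall>j\<in>I. i \<noteq> j \<longrightarrow> \<phi> (h i j) = c" by blast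
  show "\<exists>c. \<forall>i\<in>I. \<forall>j\<in>I. i \<noteq> j \<longrightarrow> h i j = c"
  proof (cases "\<exists>i0\<in>I. \<exists>j0\<in>I. i0 \<noteq> j0")
    case True
    then obtain i0 j0 where ij0: "i0 \<in> I" "j0 \<in> I" "i0 \<noteq> j0" by blast
    have "h i j = h i0 j0" if "i \<in> I" "j \<in> I" "i \<noteq> j" for i j
      using c ij0 that assms inj_onD[OF assms(1), of "h i j" "h i0 j0"] by auto
    then show ?thesis by blast
  next
    case False then show ?thesis by blast
  qed
qed auto

lemma sumc_lemma:
  fixes F' :: "nat \<Rightarrow> complex ^ 'n" and c :: real
  assumes N: "CARD('n) \<le> N"
    and F': "(F', G') \<in> optimal_fam N 1" "\<forall>i\<in>{1..N}. \<forall>j\<in>{1..N}. i \<noteq> j \<longrightarrow> RR F' G' i j = c"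
  shows "real N * (real N - 1) * c = real CARD('n) - real N * (real CARD('n) / real N)^2"
proof -
  have "(\<Sum>i\<in>{1..N}. \<Sum>j\<in>{1..N}-{i}. RR F' G' i j) = (\<Sum>i\<in>{1..N}. \<Sum>j\<in>{1..N}-{i}. c)"
  proof (rule sum.cong[OF refl], rule sum.cong[OF refl])
    fix i j assume "i \<in> {1..N}" "j \<in> {1..N} - {i}"
    then show "RR F' G' i j = c" using F'(2) by simp
  qed
  then show ?thesis using opt1_sumR[OF N F'(1)] sum_offdiag_const[where N=N and c=c] by simp
qed

theorem theorem3p6:
  fixes N :: nat and F :: "nat \<Rightarrow> complex ^ 'n"
  assumes "CARD('n) \<le> N"
    and "tight_frame N F"
    and "\<exists>(F'::nat \<Rightarrow> complex ^ 'n) (G'::nat \<Rightarrow> complex ^ 'n) (c::real). (F', G') \<in> optimal_fam N 1 \<and>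
           (\<forall>i\<in>{1..N}. \<forall>j\<in>{1..N}. i \<noteq> j \<longrightarrow>
              Re (cinner (G' i) (G' j) * cinner (F' j) (F' i)) = c)"
  shows "((\<forall>m\<in>{1..N}. (F, canon_dual N F) \<in> optimal_fam N m)
            \<longleftrightarrow> two_uniform N F (canon_dual N F))
       \<and> (two_uniform N F (canon_dual N F) \<longleftrightarrow> equiangular N F)"
proof -
  note Ncard = assms(1)
  have N1: "1 \<le> N" using Ncard card_pos[where 'a='n] by linarith
  obtain F' G' :: "nat \<Rightarrow> complex ^ 'n" and c :: real where F'1: "(F', G') \<in> optimal_fam N 1"
    and hc: "\<forall>i\<in>{1..N}. \<forall>j\<in>{1..N}. i \<noteq> j \<longrightarrow> Re (cinner (G' i) (G' j) * cinner (F' j) (F' i)) = c"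
    using assms(3) by blast
  have F'2: "\<forall>i\<in>{1..N}. \<forall>j\<in>{1..N}. i \<noteq> j \<longrightarrow> RR F' G' i j = c"
    using hc by (simp add: RR_def mult.commute)
  define q where "q = real CARD('n) / real N"
  have q0: "q \<ge> 0" by (simp add: q_def)
  obtain A where A: "A > 0" and op: "\<And>f. frame_op N F f = complex_of_real A *s f"
    using tight_op[OF assms(2)] by blast
  define G where "G i = complex_of_real (1/A) *s F i" for i
  have opfun: "frame_op N F = (\<lambda>f. complex_of_real A *s f)" using op by (rule ext)
  have injA: "inj (\<lambda>f::complex^'n. complex_of_real A *s f)"
  proof (rule injI)
    fix x y :: "complex^'n" assume eq: "complex_of_real A *s x = complex_of_real A *s y"
    have "x = complex_of_real (1/A) *s (complex_of_real A *s x)" using A by (simp add: vector_smult_assoc)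
    also have "\<dots> = complex_of_real (1/A) *s (complex_of_real A *s y)" by (simp only: eq)
    also have "\<dots> = y" using A by (simp add: vector_smult_assoc)
    finally show "x = y" .
  qed
  have CD: "canon_dual N F = G"
  proof
    fix i
    have "F i = complex_of_real A *s G i" using A by (simp add: G_def vector_smult_assoc)
    then have "canon_dual N F i = inv (\<lambda>f. complex_of_real A *s f) ((\<lambda>f. complex_of_real A *s f) (G i))"
      unfolding canon_dual_def opfun by simp
    then show "canon_dual N F i = G i" using inv_f_f[OF injA] by simp
  qed
  have DG: "dual_pair N F G" unfolding G_def by (rule scaled_dual[OF op A])
  define s where "s i = Re (cinner (F i) (F i))" for i
  have s0: "s i \<ge> 0" for i by (simp add: s_def cinner_self_nonneg)
  have sF: "cinner (F i) (F i) = complex_of_real (s i)" for i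
    unfolding s_def by (rule cinner_self_eq)
  have fg: "cinner (F i) (G j) = complex_of_real (1/A) * cinner (F i) (F j)" for i j
    by (simp add: G_def cinner_scale_right)
  have gg: "cinner (G i) (G j) = complex_of_real (1/A) * complex_of_real (1/A) * cinner (F i) (F j)" for i j
    by (simp add: G_def cinner_scale_right cinner_scale_left)
  have fgi: "cinner (F i) (G i) = complex_of_real (s i / A)" for i
    by (simp add: fg sF)
  have fgfg: "cinner (F i) (G j) * cinner (F j) (G i) = complex_of_real ((cmod (cinner (F i) (F j)))^2 / A^2)" for i j
  proof -
    have "cinner (F i) (G j) * cinner (F j) (G i)
        = complex_of_real (1/A) * complex_of_real (1/A) * (cinner (F i) (F j) * cnj (cinner (F i) (F j)))"
      by (simp add: fg cinner_commute[of "F j" "F i"] mult_ac)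
    also have "\<dots> = complex_of_real (1/A) * complex_of_real (1/A) * complex_of_real ((cmod (cinner (F i) (F j)))^2)"
      by (simp only: complex_norm_square)
    finally show ?thesis by (simp add: power2_eq_square)
  qed
  have PPs: "PP F G i = (s i / A)^2" for i
  proof -
    have "Re (cinner (G i) (G i)) = (1/A)^2 * s i"
      unfolding G_def cinner_self_scale s_def using A by (simp add: norm_divide)
    then show ?thesis by (simp add: PP_def s_def[symmetric] power2_eq_square)
  qed
  have RRs: "RR F G i j = (cmod (cinner (F i) (F j)))^2 / A^2" for i j
  proof -
    have "cinner (F j) (F i) * cinner (G i) (G j)
       = complex_of_real (1/A) * complex_of_real (1/A) * (cinner (F i) (F j) * cnj (cinner (F i) (F j)))"
      by (simp add: gg cinner_commute[of "F j" "F i"] mult_ac)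
    also have "\<dots> = complex_of_real (1/A) * complex_of_real (1/A) * complex_of_real ((cmod (cinner (F i) (F j)))^2)"
      by (simp only: complex_norm_square)
    finally show ?thesis unfolding RR_def by (simp add: power2_eq_square)
  qed
  have trace: "(\<Sum>i\<in>{1..N}. s i / A) = real CARD('n)"
  proof -
    have "complex_of_real (\<Sum>i\<in>{1..N}. s i / A) = of_nat CARD('n)"
      using dual_trace[OF DG] by (simp add: fgi of_real_sum)
    then show ?thesis by (metis of_real_eq_iff of_real_of_nat_eq)
  qed
  have cn: "cnorm (F i) = sqrt (s i)" for i by (simp add: cnorm_def s_def)
  have EN: "equal_norm N F \<longleftrightarrow> (\<exists>c. \<forall>i\<in>{1..N}. s i = c)"
    unfolding equal_norm_def cn by (rule const_inj1[of sqrt UNIV]) (auto intro: inj_onI)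
  have OU: "one_uniform N F G \<longleftrightarrow> (\<exists>c. \<forall>i\<in>{1..N}. s i = c)"
    unfolding one_uniform_def fgi
    by (rule const_inj1[of "\<lambda>x. complex_of_real (x / A)" UNIV]) (use A in \<open>auto intro: inj_onI\<close>)
  have TU2: "(\<exists>d. \<forall>i\<in>{1..N}. \<forall>j\<in>{1..N}. i \<noteq> j \<longrightarrow> cinner (F i) (G j) * cinner (F j) (G i) = d)
      \<longleftrightarrow> (\<exists>b. \<forall>i\<in>{1..N}. \<forall>j\<in>{1..N}. i \<noteq> j \<longrightarrow> cmod (cinner (F i) (F j)) = b)"
    unfolding fgfg
  proof (rule const_inj2[of "\<lambda>x. complex_of_real (x^2 / A^2)" "{0..}"])
    show "inj_on (\<lambda>x. complex_of_real (x\<^sup>2 / A\<^sup>2)) {0..}"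
    proof (rule inj_onI)
      fix x y :: real assume xy: "x \<in> {0..}" "y \<in> {0..}"
        and e: "complex_of_real (x\<^sup>2 / A\<^sup>2) = complex_of_real (y\<^sup>2 / A\<^sup>2)"
      from e have "x\<^sup>2 / A\<^sup>2 = y\<^sup>2 / A\<^sup>2" by (simp only: of_real_eq_iff)
      then have "x\<^sup>2 = y\<^sup>2" using A by (simp add: field_simps)
      then show "x = y" using xy by (simp add: power2_eq_iff_nonneg)
    qed
  qed auto
  have EQ: "equiangular N F \<longleftrightarrow> (\<exists>c. \<forall>i\<in>{1..N}. s i = c) \<and>
      (\<exists>b. \<forall>i\<in>{1..N}. \<forall>j\<in>{1..N}. i \<noteq> j \<longrightarrow> cmod (cinner (F i) (F j)) = b)"
    unfolding equiangular_def EN by simp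
  have partB: "two_uniform N F G \<longleftrightarrow> equiangular N F"
    unfolding two_uniform_def EQ OU TU2 using DG by simp
  have sconst: "\<forall>i\<in>{1..N}. s i = q * A" if ex: "\<exists>c. \<forall>i\<in>{1..N}. s i = c"
  proof -
    obtain c0 where c0: "\<forall>i\<in>{1..N}. s i = c0" using ex by blast
    have "(\<Sum>i\<in>{1..N}. s i / A) = real N * (c0 / A)" using c0 by simp
    then have "c0 / A = q" using trace N1 by (simp add: q_def field_simps)
    then show ?thesis using c0 A by (simp add: field_simps)
  qed
  have partA: "(\<forall>m\<in>{1..N}. (F, G) \<in> optimal_fam N m) \<longleftrightarrow> equiangular N F"
  proof
    assume all: "\<forall>m\<in>{1..N}. (F, G) \<in> optimal_fam N m"
    have o1: "(F, G) \<in> optimal_fam N 1" by (rule bspec[OF all]) (use N1 in simp)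
    have "s i = q * A" if "i \<in> {1..N}" for i
    proof -
      have "(s i / A)^2 = q^2" using opt1_PP[OF Ncard o1 that] PPs by (simp add: q_def)
      then have "s i / A = q" using s0[of i] A q0 by (simp add: power2_eq_iff_nonneg)
      then show ?thesis using A by (simp add: field_simps)
    qed
    then have c1: "\<exists>c. \<forall>i\<in>{1..N}. s i = c" by blast
    have c2: "\<exists>b. \<forall>i\<in>{1..N}. \<forall>j\<in>{1..N}. i \<noteq> j \<longrightarrow> cmod (cinner (F i) (F j)) = b"
    proof (cases "2 \<le> N")
      case True
      have "(F, G) \<in> optimal_fam N 2" by (rule bspec[OF all]) (use True in simp)
      then have R: "\<forall>i\<in>{1..N}. \<forall>j\<in>{1..N}. i \<noteq> j \<longrightarrow> RR F G i j = c"
        using opt2_iff[OF Ncard True F'1 F'2, of F G] by blast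
      have "cmod (cinner (F i) (F j)) = sqrt (c * A^2)" if "i \<in> {1..N}" "j \<in> {1..N}" "i \<noteq> j" for i j
      proof -
        have "(cmod (cinner (F i) (F j)))^2 / A^2 = c" using R that RRs by simp
        then have "(cmod (cinner (F i) (F j)))^2 = c * A^2" using A by (simp add: field_simps)
        then show ?thesis by (metis norm_ge_zero real_sqrt_abs abs_of_nonneg real_sqrt_unique)
      qed
      then show ?thesis by blast
    next
      case False
      then have "N = 1" using N1 by simp
      then show ?thesis by auto
    qed
    show "equiangular N F" using EQ c1 c2 by blast
  next
    assume eq: "equiangular N F"
    then have c1: "\<exists>c. \<forall>i\<in>{1..N}. s i = c" and
      c2: "\<exists>b. \<forall>i\<in>{1..N}. \<forall>j\<in>{1..N}. i \<noteq> j \<longrightarrow> cmod (cinner (F i) (F j)) = b"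
      using EQ by auto
    have sq: "\<forall>i\<in>{1..N}. s i = q * A" by (rule sconst[OF c1])
    have PPq: "\<forall>i\<in>{1..N}. PP F G i = q^2" using sq A by (simp add: PPs)
    have o1: "(F, G) \<in> optimal_fam N 1"
      using opt1_iff[OF Ncard] DG PPq_eps[OF Ncard DG] PPq by (simp add: q_def)
    show "\<forall>m\<in>{1..N}. (F, G) \<in> optimal_fam N m"
    proof
      fix m assume m: "m \<in> {1..N}"
      show "(F, G) \<in> optimal_fam N m"
      proof (cases "m = 1")
        case True then show ?thesis using o1 by simp
      next
        case False
        then have m2: "2 \<le> m" and N2: "2 \<le> N" using m by auto
        obtain b where b: "\<forall>i\<in>{1..N}. \<forall>j\<in>{1..N}. i \<noteq> j \<longrightarrow> cmod (cinner (F i) (F j)) = b"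
          using c2 by blast
        define c0 where "c0 = b^2 / A^2"
        have R0: "\<forall>i\<in>{1..N}. \<forall>j\<in>{1..N}. i \<noteq> j \<longrightarrow> RR F G i j = c0"
          using b by (simp add: RRs c0_def)
        have "real N * (real N - 1) * c0 = real N * (real N - 1) * c"
          using sumc_lemma[OF Ncard o1 R0] sumc_lemma[OF Ncard F'1 F'2] by simp
        moreover have "real N * (real N - 1) \<noteq> 0" using N2 by simp
        ultimately have "c0 = c" by simp
        then have "(F, G) \<in> optimal_fam N 2"
          using opt2_iff[OF Ncard N2 F'1 F'2, of F G] o1 R0 by simp
        then show ?thesis using optm[OF Ncard N2 F'1 F'2 m2] by simp
      qed
    qed
  qed
  show ?thesis unfolding CD using partA partB by blast
qed

end
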